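(* In the setting below, fix an assignment matrix $A$ for which event $\mathcal A$ holds, and suppose $$np^2\ \ge\ \frac{30\cdot 12^2\,e^{4\kappa}}{\gamma^2}\log m .$$ Then, with probability at least $1-\exp\!\big(-\frac{\gamma^2np^2}{10\cdot12^2\cdot e^{4\kappa}}\big)$ over the random responses, $$\mu^*(P^* )-\|P-P^*\|_2\ \ge\ \frac{\gamma}{6e^{2\kappa}} .$$
   Context: Setting. Let $n\ge1$ (number of users) and $m\ge2$ (number of items). Fix user parameters $\theta^*_1,\dots,\theta^*_n\in\mathbb R$ and item parameters $\beta^*_1,\dots,\beta^*_m\in\mathbb R$; let $\kappa=\max_i\beta^*_i-\min_i\beta^*_i$ and $\pi^*_i=e^{\beta^*_i}/\sum_ke^{\beta^*_k}$. The responses $X_{li}\in\{0,1\}$ are independent with $\Pr(X_{li}=1)=e^{\theta^*_l}/(e^{\theta^*_l}+e^{\beta^*_i})$. Let $\gamma=\min_{l\in[n],\,i\ne j\in[m]}\mathbb E[X_{li}(1-X_{lj})]$. For an assignment matrix $A\in\{0,1\}^{n\times m}$ and $p\in(0,1]$, let $B=A^\top A$, $d=\frac32mnp^2$, and define $m\times m$ matrices $P,P^*$ by, for $i\ne j$, $P_{ij}=\frac1d\sum_{l=1}^nA_{li}A_{lj}X_{li}(1-X_{lj})$, $P^*_{ij}=\frac1d\sum_{l=1}^nA_{li}A_{lj}\mathbb E[X_{li}(1-X_{lj})]$, and $P_{ii}=1-\sum_{k\ne i}P_{ik}$, $P^*_{ii}=1-\sum_{k\ne i}P^*_{ik}$;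 $P^*$ is reversible with respect to $\pi^*$. Event $\mathcal A$: $\frac12np^2\le B_{ij}\le\frac32np^2$ for all $i\ne j$. For a stochastic matrix $M$ reversible with respect to a positive probability vector (eigenvalues real, $1=\lambda_1\ge\lambda_2\ge\dots\ge\lambda_m$), the spectral gap is $\mu^*(M)=1-\max\{|\lambda_2|,|\lambda_m|\}$. $\|\cdot\|_2$ for matrices is the spectral norm. *)

theory Defs
  imports "HOL-Probability.Product_PMF" "Jordan_Normal_Form.Char_Poly"
begin

text \<open>Users are indexed by l < n, items by i < m. Matrices are functions nat => nat => real
  whose entries outside [m] x [m] are irrelevant.\<close>

definition resp_prob :: "(nat \<Rightarrow> real) \<Rightarrow> (nat \<Rightarrow> real) \<Rightarrow> nat \<Rightarrow> nat \<Rightarrow> real" where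
  "resp_prob \<theta> \<beta> l i = exp (\<theta> l) / (exp (\<theta> l) + exp (\<beta> i))"

definition kappa :: "nat \<Rightarrow> (nat \<Rightarrow> real) \<Rightarrow> real" where
  "kappa m \<beta> = Max (\<beta> ` {..<m}) - Min (\<beta> ` {..<m})"

text \<open>gamma = min over l, i ~= j of E[X_li (1 - X_lj)] = q_li (1 - q_lj) (independence).\<close>
definition gamma_min :: "nat \<Rightarrow> nat \<Rightarrow> (nat \<Rightarrow> real) \<Rightarrow> (nat \<Rightarrow> real) \<Rightarrow> real" where
  "gamma_min n m \<theta> \<beta> = Min {resp_prob \<theta> \<beta> l i * (1 - resp_prob \<theta> \<beta> l j) | l i j.
      l < n \<and> i < m \<and> j < m \<and> i \<noteq> j}"

definition complete_diag :: "nat \<Rightarrow> (nat \<Rightarrow> nat \<Rightarrow> real) \<Rightarrow> nat \<Rightarrow> nat \<Rightarrow> real" where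
  "complete_diag m Q i j = (if i = j then 1 - (\<Sum>k\<in>{..<m} - {i}. Q i k) else Q i j)"

definition P_emp :: "nat \<Rightarrow> nat \<Rightarrow> real \<Rightarrow> (nat \<Rightarrow> nat \<Rightarrow> bool) \<Rightarrow> (nat \<times> nat \<Rightarrow> bool)
    \<Rightarrow> nat \<Rightarrow> nat \<Rightarrow> real" where
  "P_emp n m p A X = complete_diag m (\<lambda>i j. (1 / (3/2 * real m * real n * p^2)) *
      (\<Sum>l<n. of_bool (A l i) * of_bool (A l j) * of_bool (X (l, i)) * (1 - of_bool (X (l, j)))))"

definition P_star :: "nat \<Rightarrow> nat \<Rightarrow> real \<Rightarrow> (nat \<Rightarrow> nat \<Rightarrow> bool) \<Rightarrow> (nat \<Rightarrow> real) \<Rightarrow> (nat \<Rightarrow> real)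
    \<Rightarrow> nat \<Rightarrow> nat \<Rightarrow> real" where
  "P_star n m p A \<theta> \<beta> = complete_diag m (\<lambda>i j. (1 / (3/2 * real m * real n * p^2)) *
      (\<Sum>l<n. of_bool (A l i) * of_bool (A l j) * (resp_prob \<theta> \<beta> l i * (1 - resp_prob \<theta> \<beta> l j))))"

definition response_pmf :: "nat \<Rightarrow> nat \<Rightarrow> (nat \<Rightarrow> real) \<Rightarrow> (nat \<Rightarrow> real) \<Rightarrow> (nat \<times> nat \<Rightarrow> bool) pmf" where
  "response_pmf n m \<theta> \<beta> = Pi_pmf ({..<n} \<times> {..<m}) False (\<lambda>(l, i). bernoulli_pmf (resp_prob \<theta> \<beta> l i))"

text \<open>Eigenvalues (with multiplicity, real roots of the characteristic polynomial) in
  non-increasing order: lambda_1 >= ... >= lambda_m. For a reversible stochastic matrix all m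
  eigenvalues are real.\<close>
definition eigs_desc :: "nat \<Rightarrow> (nat \<Rightarrow> nat \<Rightarrow> real) \<Rightarrow> real list" where
  "eigs_desc m M = rev (sorted_list_of_multiset (proots (char_poly (mat m m (\<lambda>(i, j). M i j)))))"

definition spectral_gap :: "nat \<Rightarrow> (nat \<Rightarrow> nat \<Rightarrow> real) \<Rightarrow> real" where
  "spectral_gap m M = 1 - max \<bar>eigs_desc m M ! 1\<bar> \<bar>eigs_desc m M ! (m - 1)\<bar>"

definition spec_norm :: "nat \<Rightarrow> (nat \<Rightarrow> nat \<Rightarrow> real) \<Rightarrow> real" where
  "spec_norm m M = Sup {sqrt (\<Sum>i<m. (\<Sum>j<m. M i j * x j)^2) | x :: nat \<Rightarrow> real. (\<Sum>j<m. (x j)^2) \<le> 1}"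

end

theory Submission
  imports Defs "HOL-Probability.Hoeffding"
begin

lemma eig_bound:
  fixes P :: "nat \<Rightarrow> nat \<Rightarrow> real" and w :: "nat \<Rightarrow> real" and v :: "nat \<Rightarrow> complex" and \<mu> :: complex
  assumes wpos: "\<And>i. i<m \<Longrightarrow> w i > 0"
  and rows: "\<And>i. i<m \<Longrightarrow> (\<Sum>j<m. P i j) = 1"
  and rev: "\<And>i j. i<m \<Longrightarrow> j<m \<Longrightarrow> w i * P i j = w j * P j i"
  and lb: "\<And>i j. i<m \<Longrightarrow> j<m \<Longrightarrow> \<alpha> * w j \<le> P i j * (\<Sum>k<m. w k)"
  and eig: "\<And>i. i<m \<Longrightarrow> (\<Sum>j<m. of_real (P i j) * v j) = \<mu> * v i"
  and orth: "(\<Sum>j<m. of_real (w j) * v j) = 0"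
  and nz: "kz < m" "v kz \<noteq> 0"
  shows "Im \<mu> = 0 \<and> cmod \<mu> \<le> 1 - \<alpha>"
proof
  define T where "T = (\<Sum>i<m. \<Sum>j<m. of_real (w i * P i j) * (cnj (v i) * v j))"
  define Q where "Q = (\<Sum>i<m. w i * (cmod (v i))^2)"
  have Qpos: "Q > 0"
  proof -
    have "Q \<ge> w kz * (cmod (v kz))^2" unfolding Q_def
      by (rule member_le_sum) (use nz wpos in \<open>auto intro!: mult_nonneg_nonneg less_imp_le[OF wpos]\<close>)
    moreover have "w kz * (cmod (v kz))^2 > 0" using nz wpos by auto
    ultimately show ?thesis by linarith
  qed
  have "\<mu> * of_real Q = T"
  proof -
    have cn: "complex_of_real ((cmod z)^2) = cnj z * z" for z
      by (subst complex_norm_square) (simp add: mult.commute)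
    have "\<mu> * of_real Q = (\<Sum>i<m. of_real (w i) * cnj (v i) * (\<mu> * v i))"
      unfolding Q_def of_real_sum of_real_mult cn sum_distrib_left
      by (intro sum.cong refl) (simp add: mult_ac)
    also have "\<dots> = (\<Sum>i<m. of_real (w i) * cnj (v i) * (\<Sum>j<m. of_real (P i j) * v j))"
      by (intro sum.cong refl) (simp add: eig)
    also have "\<dots> = T" unfolding T_def
      by (intro sum.cong refl) (simp add: sum_distrib_left mult_ac)
    finally show ?thesis .
  qed
  moreover have "cnj T = T"
  proof -
    have "cnj T = (\<Sum>i<m. \<Sum>j<m. of_real (w i * P i j) * (v i * cnj (v j)))"
      unfolding T_def by (simp add: mult_ac)
    also have "\<dots> = (\<Sum>i<m. \<Sum>j<m. of_real (w j * P j i) * (v i * cnj (v j)))"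
      by (intro sum.cong refl) (simp add: rev)
    also have "\<dots> = T" unfolding T_def
      by (subst sum.swap) (simp add: mult_ac)
    finally show ?thesis .
  qed
  moreover have "Im T = - Im T" using \<open>cnj T = T\<close> by (metis cnj.sel(2))
  ultimately have "Im (\<mu> * of_real Q) = 0" by simp
  then show "Im \<mu> = 0" using Qpos by simp
next
  define W where "W = (\<Sum>k<m. w k)"
  have Wpos: "W > 0" unfolding W_def using nz wpos by (intro sum_pos) auto
  obtain k where k: "k < m" "\<And>j. j < m \<Longrightarrow> cmod (v j) \<le> cmod (v k)"
  proof -
    have fin: "finite ((\<lambda>j. cmod (v j)) ` {..<m})" and ne: "(\<lambda>j. cmod (v j)) ` {..<m} \<noteq> {}" using nz by auto
    from Max_in[OF fin ne] obtain k where "k < m" "cmod (v k) = Max ((\<lambda>j. cmod (v j)) ` {..<m})" by auto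
    moreover have "\<And>j. j < m \<Longrightarrow> cmod (v j) \<le> Max ((\<lambda>j. cmod (v j)) ` {..<m})"
      using fin by (intro Max_ge) auto
    ultimately show ?thesis using that by metis
  qed
  have kpos: "cmod (v k) > 0" using k(2)[OF nz(1)] nz by auto
  define c where "c j = P k j - \<alpha> * w j / W" for j
  have cnn: "c j \<ge> 0" if "j < m" for j
    using lb[OF k(1) that] Wpos unfolding c_def by (simp add: field_simps W_def mult.commute)
  have csum: "(\<Sum>j<m. c j) = 1 - \<alpha>"
  proof -
    have "(\<Sum>j<m. c j) = (\<Sum>j<m. P k j) - \<alpha> / W * (\<Sum>j<m. w j)"
      unfolding c_def by (simp add: sum_subtractf sum_distrib_left)
    also have "\<dots> = 1 - \<alpha>" using rows[OF k(1)] Wpos unfolding W_def by simp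
    finally show ?thesis .
  qed
  have "\<mu> * v k = (\<Sum>j<m. of_real (c j) * v j) + of_real (\<alpha> / W) * (\<Sum>j<m. of_real (w j) * v j)"
    unfolding eig[OF k(1), symmetric] c_def
    by (simp add: sum_distrib_left algebra_simps sum.distrib[symmetric] sum_subtractf[symmetric])
  also have "\<dots> = (\<Sum>j<m. of_real (c j) * v j)" using orth by simp
  finally have eq: "\<mu> * v k = (\<Sum>j<m. of_real (c j) * v j)" .
  have "cmod \<mu> * cmod (v k) = cmod (\<Sum>j<m. of_real (c j) * v j)"
    by (simp add: eq[symmetric] norm_mult)
  also have "\<dots> \<le> (\<Sum>j<m. cmod (of_real (c j) * v j))" by (rule norm_sum)
  also have "\<dots> \<le> (\<Sum>j<m. c j * cmod (v k))"
    by (intro sum_mono) (simp add: norm_mult cnn k(2) mult_left_mono)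
  also have "\<dots> = (1 - \<alpha>) * cmod (v k)" by (simp add: sum_distrib_right[symmetric] csum)
  finally show "cmod \<mu> \<le> 1 - \<alpha>" using kpos by simp
qed

lemma left_eig_bound:
  fixes P :: "nat \<Rightarrow> nat \<Rightarrow> real" and w :: "nat \<Rightarrow> real" and y :: "nat \<Rightarrow> complex" and \<mu> :: complex
  assumes wpos: "\<And>i. i<Suc n \<Longrightarrow> w i > 0"
  and rows: "\<And>i. i<Suc n \<Longrightarrow> (\<Sum>j<Suc n. P i j) = 1"
  and rev: "\<And>i j. i<Suc n \<Longrightarrow> j<Suc n \<Longrightarrow> w i * P i j = w j * P j i"
  and lb: "\<And>i j. i<Suc n \<Longrightarrow> j<Suc n \<Longrightarrow> \<alpha> * w j \<le> P i j * (\<Sum>k<Suc n. w k)"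
  and eig: "\<And>j. j<n \<Longrightarrow> (\<Sum>i<n. y i * of_real (P (Suc i) (Suc j) - P 0 (Suc j))) = \<mu> * y j"
  and nz: "iz < n" "y iz \<noteq> 0"
  shows "Im \<mu> = 0 \<and> cmod \<mu> \<le> 1 - \<alpha>"
proof -
  define w' where "w' k = (if k = 0 then - (\<Sum>i<n. y i) else y (k - 1))" for k
  have sumw': "(\<Sum>k<Suc n. w' k) = 0"
    unfolding sum.lessThan_Suc_shift by (simp add: w'_def)
  have left_succ: "(\<Sum>k<Suc n. w' k * of_real (P k (Suc j))) = \<mu> * w' (Suc j)" if j: "j < n" for j
  proof -
    have "(\<Sum>k<Suc n. w' k * of_real (P k (Suc j)))
        = - (\<Sum>i<n. y i) * of_real (P 0 (Suc j)) + (\<Sum>i<n. y i * of_real (P (Suc i) (Suc j)))"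
      unfolding sum.lessThan_Suc_shift by (simp add: w'_def)
    also have "\<dots> = (\<Sum>i<n. y i * of_real (P (Suc i) (Suc j) - P 0 (Suc j)))"
      by (simp add: sum_distrib_right algebra_simps sum_subtractf)
    also have "\<dots> = \<mu> * w' (Suc j)" using eig[OF j] by (simp add: w'_def)
    finally show ?thesis .
  qed
  have left0: "(\<Sum>k<Suc n. w' k * of_real (P k 0)) = \<mu> * w' 0"
  proof -
    have P0: "P k 0 = 1 - (\<Sum>j<n. P k (Suc j))" if "k < Suc n" for k
      using rows[OF that] unfolding sum.lessThan_Suc_shift by simp
    have "(\<Sum>k<Suc n. w' k * of_real (P k 0)) = (\<Sum>k<Suc n. w' k) - (\<Sum>j<n. \<Sum>k<Suc n. w' k * of_real (P k (Suc j)))"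
    proof -
      have "(\<Sum>k<Suc n. w' k * of_real (P k 0)) = (\<Sum>k<Suc n. w' k - (\<Sum>j<n. w' k * of_real (P k (Suc j))))"
        by (intro sum.cong refl) (simp add: P0 of_real_sum sum_distrib_left right_diff_distrib)
      also have "\<dots> = (\<Sum>k<Suc n. w' k) - (\<Sum>k<Suc n. \<Sum>j<n. w' k * of_real (P k (Suc j)))"
        by (rule sum_subtractf)
      also have "(\<Sum>k<Suc n. \<Sum>j<n. w' k * of_real (P k (Suc j))) = (\<Sum>j<n. \<Sum>k<Suc n. w' k * of_real (P k (Suc j)))"
        by (rule sum.swap)
      finally show ?thesis .
    qed
    also have "\<dots> = - (\<Sum>j<n. \<mu> * w' (Suc j))" using sumw' left_succ by simp
    also have "\<dots> = \<mu> * w' 0" by (simp add: w'_def sum_distrib_left)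
    finally show ?thesis .
  qed
  have left: "(\<Sum>k<Suc n. w' k * of_real (P k j)) = \<mu> * w' j" if "j < Suc n" for j
    using that left0 left_succ by (cases j) auto
  define v where "v k = w' k / of_real (w k)" for k
  show ?thesis
  proof (rule eig_bound[where P=P and w=w and v=v and kz="Suc iz"])
    show "\<And>i. i < Suc n \<Longrightarrow> 0 < w i" by fact
    show "\<And>i. i < Suc n \<Longrightarrow> (\<Sum>j<Suc n. P i j) = 1" by fact
    show "\<And>i j. i < Suc n \<Longrightarrow> j < Suc n \<Longrightarrow> w i * P i j = w j * P j i" by fact
    show "\<And>i j. i < Suc n \<Longrightarrow> j < Suc n \<Longrightarrow> \<alpha> * w j \<le> P i j * (\<Sum>k<Suc n. w k)" by fact
    show "Suc iz < Suc n" using nz by simp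
    show "v (Suc iz) \<noteq> 0" using nz wpos[of "Suc iz"] by (simp add: v_def w'_def)
    show "(\<Sum>j<Suc n. complex_of_real (w j) * v j) = 0"
    proof -
      have "(\<Sum>j<Suc n. complex_of_real (w j) * v j) = (\<Sum>j<Suc n. w' j)"
        by (intro sum.cong refl) (use wpos in \<open>fastforce simp: v_def\<close>)
      thus ?thesis using sumw' by simp
    qed
    fix i assume i: "i < Suc n"
    have "(\<Sum>j<Suc n. complex_of_real (P i j) * v j) = (\<Sum>j<Suc n. w' j * of_real (P j i) / of_real (w i))"
    proof (intro sum.cong refl)
      fix j assume j: "j \<in> {..<Suc n}"
      have "P i j / w j = P j i / w i" using rev[OF i, of j] j wpos[OF i] wpos[of j]
        by (simp add: field_simps)
      hence "complex_of_real (P i j) / of_real (w j) = of_real (P j i) / of_real (w i)"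
        by (metis of_real_divide)
      thus "complex_of_real (P i j) * v j = w' j * of_real (P j i) / of_real (w i)"
        unfolding v_def by (metis times_divide_eq_left times_divide_eq_right mult.commute)
    qed
    also have "\<dots> = \<mu> * v i" using left[OF i] by (simp add: v_def sum_divide_distrib[symmetric])
    finally show "(\<Sum>j<Suc n. complex_of_real (P i j) * v j) = \<mu> * v i" .
  qed
qed

lemma sum_delta0:
  fixes f :: "nat \<Rightarrow> 'a::comm_ring_1"
  shows "(\<Sum>k\<in>{0..<N}. of_bool (k = a) * f k) = (if a < N then f a else 0)"
proof -
  have "(\<Sum>k\<in>{0..<N}. of_bool (k = a) * f k) = (\<Sum>k\<in>{0..<N}. if k = a then f a else 0)"
    by (intro sum.cong refl) simp
  also have "\<dots> = (if a < N then f a else 0)" by (simp add: sum.delta)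
  finally show ?thesis .
qed

lemma sum_Si:
  fixes f :: "nat \<Rightarrow> 'a::comm_ring_1"
  assumes "i < N"
  shows "(\<Sum>k\<in>{0..<N}. (if k = 0 \<and> i \<noteq> 0 then -1 else of_bool (i = k)) * f k) = (if i = 0 then f 0 else f i - f 0)"
proof -
  have "(\<Sum>k\<in>{0..<N}. (if k = 0 \<and> i \<noteq> 0 then -1 else of_bool (i = k)) * f k)
     = (\<Sum>k\<in>{0..<N}. of_bool (k = i) * f k - of_bool (i \<noteq> 0) * (of_bool (k = 0) * f k))"
    by (rule sum.cong[OF refl]) auto
  also have "\<dots> = (\<Sum>k\<in>{0..<N}. of_bool (k = i) * f k) - of_bool (i \<noteq> 0) * (\<Sum>k\<in>{0..<N}. of_bool (k = 0) * f k)"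
    by (simp only: sum_subtractf sum_distrib_left)
  also have "\<dots> = (if i = 0 then f 0 else f i - f 0)" using assms
    by (simp add: sum_delta0)
  finally show ?thesis .
qed

lemma sum_S:
  fixes g :: "nat \<Rightarrow> 'a::comm_ring_1"
  assumes "i < N"
  shows "(\<Sum>k\<in>{0..<N}. (if k = 0 then 1 else of_bool (i = k)) * g k) = g 0 + (if i \<noteq> 0 then g i else 0)"
proof -
  have "(\<Sum>k\<in>{0..<N}. (if k = 0 then 1 else of_bool (i = k)) * g k)
      = (\<Sum>k\<in>{0..<N}. of_bool (k = 0) * g k + of_bool (i \<noteq> 0) * (of_bool (k = i) * g k))"
    by (rule sum.cong[OF refl]) auto
  also have "\<dots> = (\<Sum>k\<in>{0..<N}. of_bool (k = 0) * g k) + of_bool (i \<noteq> 0) * (\<Sum>k\<in>{0..<N}. of_bool (k = i) * g k)"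
    by (simp only: sum.distrib sum_distrib_left)
  also have "\<dots> = g 0 + (if i \<noteq> 0 then g i else 0)" using assms
    by (simp add: sum_delta0)
  finally show ?thesis .
qed

lemma char_poly_deflate:
  fixes P :: "nat \<Rightarrow> nat \<Rightarrow> 'a::comm_ring_1"
  assumes rows: "\<And>i. i<Suc n \<Longrightarrow> (\<Sum>j<Suc n. P i j) = 1"
  shows "char_poly (mat (Suc n) (Suc n) (\<lambda>(i,j). P i j))
       = [:-1, 1:] * char_poly (mat n n (\<lambda>(i,j). P (Suc i) (Suc j) - P 0 (Suc j)))"
proof -
  define N where "N = Suc n"
  define P' where "P' = mat N N (\<lambda>(i,j). P i j)"
  define S :: "'a mat" where "S = mat N N (\<lambda>(i,j). if j = 0 then 1 else of_bool (i = j))"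
  define Si :: "'a mat" where "Si = mat N N (\<lambda>(i,j). if j = 0 \<and> i \<noteq> 0 then -1 else of_bool (i = j))"
  define B where "B = mat n n (\<lambda>(i,j). P (Suc i) (Suc j) - P 0 (Suc j))"
  define A1 :: "'a mat" where "A1 = mat 1 1 (\<lambda>_. 1)"
  define A2 where "A2 = mat 1 n (\<lambda>(_,j). P 0 (Suc j))"
  have car: "P' \<in> carrier_mat N N" "S \<in> carrier_mat N N" "Si \<in> carrier_mat N N"
    unfolding P'_def S_def Si_def by auto
  have SSi: "S * Si = 1\<^sub>m N"
  proof (rule eq_matI)
    fix i j assume ij: "i < dim_row (1\<^sub>m N :: 'a mat)" "j < dim_col (1\<^sub>m N :: 'a mat)"
    have "(S * Si) $$ (i, j) = (\<Sum>k\<in>{0..<N}. (if k = 0 then 1 else of_bool (i = k)) * Si $$ (k, j))"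
      using ij unfolding S_def by (simp add: scalar_prod_def Si_def)
    also have "\<dots> = Si $$ (0, j) + (if i \<noteq> 0 then Si $$ (i, j) else 0)"
      using ij by (intro sum_S) simp
    also have "\<dots> = 1\<^sub>m N $$ (i, j)" using ij unfolding Si_def by (auto simp: N_def)
    finally show "(S * Si) $$ (i, j) = 1\<^sub>m N $$ (i, j)" .
  qed (auto simp: S_def Si_def)
  have SiS: "Si * S = 1\<^sub>m N"
  proof (rule eq_matI)
    fix i j assume ij: "i < dim_row (1\<^sub>m N :: 'a mat)" "j < dim_col (1\<^sub>m N :: 'a mat)"
    have "(Si * S) $$ (i, j) = (\<Sum>k\<in>{0..<N}. (if k = 0 \<and> i \<noteq> 0 then -1 else of_bool (i = k)) * S $$ (k, j))"
      using ij unfolding Si_def by (simp add: scalar_prod_def S_def)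
    also have "\<dots> = (if i = 0 then S $$ (0, j) else S $$ (i, j) - S $$ (0, j))"
      using ij by (intro sum_Si) simp
    also have "\<dots> = 1\<^sub>m N $$ (i, j)" using ij unfolding S_def by (auto simp: N_def)
    finally show "(Si * S) $$ (i, j) = 1\<^sub>m N $$ (i, j)" .
  qed (auto simp: S_def Si_def)
  define C where "C = Si * (P' * S)"
  have PS: "(P' * S) $$ (k, j) = (if j = 0 then 1 else P k j)" if "k < N" "j < N" for k j
  proof -
    have "(P' * S) $$ (k, j) = (\<Sum>l\<in>{0..<N}. P k l * (if j = 0 then 1 else of_bool (l = j)))"
      using that unfolding P'_def S_def by (simp add: scalar_prod_def)
    also have "\<dots> = (if j = 0 then 1 else P k j)"
    proof (cases "j = 0")
      case True thus ?thesis using that rows[of k] by (simp add: N_def atLeast0LessThan)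
    next
      case False
      have "(\<Sum>l\<in>{0..<N}. P k l * (if j = 0 then 1 else of_bool (l = j))) = (\<Sum>l\<in>{0..<N}. of_bool (l = j) * P k l)"
        using False by (intro sum.cong refl) auto
      thus ?thesis using False that by (simp add: sum_delta0)
    qed
    finally show ?thesis .
  qed
  have CB: "C = four_block_mat A1 A2 (0\<^sub>m n 1) B"
  proof (rule eq_matI)
    fix i j assume ij: "i < dim_row (four_block_mat A1 A2 (0\<^sub>m n 1) B)" "j < dim_col (four_block_mat A1 A2 (0\<^sub>m n 1) B)"
    hence ij': "i < N" "j < N" by (auto simp: A1_def B_def N_def)
    have "C $$ (i, j) = (\<Sum>k\<in>{0..<N}. (if k = 0 \<and> i \<noteq> 0 then -1 else of_bool (i = k)) * (P' * S) $$ (k, j))"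
      using ij' car unfolding C_def by (simp add: scalar_prod_def Si_def)
    also have "\<dots> = (if i = 0 then (P' * S) $$ (0, j) else (P' * S) $$ (i, j) - (P' * S) $$ (0, j))"
      using ij' by (intro sum_Si) simp
    also have "\<dots> = four_block_mat A1 A2 (0\<^sub>m n 1) B $$ (i, j)"
      using ij' by (auto simp: PS N_def A1_def A2_def B_def)
    finally show "C $$ (i, j) = four_block_mat A1 A2 (0\<^sub>m n 1) B $$ (i, j)" .
  qed (auto simp: C_def A1_def B_def Si_def S_def N_def)
  have "P' = S * C * Si"
  proof -
    have PSc: "P' * S \<in> carrier_mat N N" using car by simp
    have "S * C = (S * Si) * (P' * S)" unfolding C_def
      by (rule assoc_mult_mat[symmetric, OF car(2) car(3) PSc])
    also have "\<dots> = P' * S" unfolding SSi by (rule left_mult_one_mat[OF PSc])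
    finally have "S * C * Si = P' * S * Si" by simp
    also have "\<dots> = P' * (S * Si)" by (rule assoc_mult_mat[OF car(1) car(2) car(3)])
    also have "\<dots> = P'" unfolding SSi by (rule right_mult_one_mat[OF car(1)])
    finally show ?thesis by simp
  qed
  moreover have Cc: "C \<in> carrier_mat N N" unfolding C_def using car by simp
  moreover have "dim_row P' = N" using car by auto
  ultimately have "similar_mat P' C"
    unfolding similar_mat_def similar_mat_wit_def Let_def using car SSi SiS
    by (intro exI[of _ S] exI[of _ Si]) auto
  hence "char_poly P' = char_poly C" by (rule char_poly_similar)
  also have "\<dots> = char_poly A1 * char_poly B" unfolding CB
    by (rule char_poly_four_block_zeros_col) (auto simp: A1_def A2_def B_def)
  also have "char_poly A1 = [:-1, 1:]"
    by (subst char_poly_upper_triangular[of A1 1]) (auto simp: A1_def upper_triangular_def diag_mat_def)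
  finally show ?thesis unfolding P'_def B_def N_def .
qed

lemma proots_linear_prod: "proots (\<Prod>r\<leftarrow>rs. [:-r, 1:]) = mset (rs :: real list)"
proof (induction rs)
  case (Cons r rs)
  have "(\<Prod>r\<leftarrow>rs. [:-r, 1:]) \<noteq> 0" by (auto simp: prod_list_zero_iff)
  hence "proots ([:-r, 1:] * (\<Prod>r\<leftarrow>rs. [:-r, 1:])) = proots [:-r, 1:] + proots (\<Prod>r\<leftarrow>rs. [:-r, 1:])"
    by (intro proots_mult) auto
  thus ?case using Cons by simp
qed simp

lemma poly_lin_prod_of_real:
  "poly (\<Prod>a\<leftarrow>map complex_of_real rs. [:-a, 1:]) (of_real x) = of_real (poly (\<Prod>r\<leftarrow>rs. [:-r, 1:]) x)"
  by (induction rs) simp_all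

lemma gap_lemma:
  fixes P :: "nat \<Rightarrow> nat \<Rightarrow> real" and w :: "nat \<Rightarrow> real"
  assumes n1: "n \<ge> 1" and apos: "\<alpha> > 0"
  and wpos: "\<And>i. i<Suc n \<Longrightarrow> w i > 0"
  and rows: "\<And>i. i<Suc n \<Longrightarrow> (\<Sum>j<Suc n. P i j) = 1"
  and rev: "\<And>i j. i<Suc n \<Longrightarrow> j<Suc n \<Longrightarrow> w i * P i j = w j * P j i"
  and lb: "\<And>i j. i<Suc n \<Longrightarrow> j<Suc n \<Longrightarrow> \<alpha> * w j \<le> P i j * (\<Sum>k<Suc n. w k)"
  shows "\<alpha> \<le> spectral_gap (Suc n) P"
proof -
  define B where "B = mat n n (\<lambda>(i,j). P (Suc i) (Suc j) - P 0 (Suc j))"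
  have Bcar: "B \<in> carrier_mat n n" unfolding B_def by simp
  define Bc where "Bc = map_mat complex_of_real B"
  have Bccar: "Bc \<in> carrier_mat n n" unfolding Bc_def using Bcar by simp
  have cpBc: "char_poly Bc = map_poly of_real (char_poly B)"
    unfolding Bc_def by (rule of_real_hom.char_poly_hom[OF Bcar])
  obtain as where as: "char_poly Bc = (\<Prod>a\<leftarrow>as. [:- a, 1:])" "length as = n"
    using char_poly_factorized[OF Bccar] by blast
  have roots: "Im a = 0 \<and> cmod a \<le> 1 - \<alpha>" if a: "a \<in> set as" for a
  proof -
    have "poly (char_poly Bc) a = 0" unfolding as(1) by (rule linear_poly_root[OF a])
    hence "poly (char_poly (transpose_mat Bc)) a = 0" using Bccar by simp
    hence "eigenvalue (transpose_mat Bc) a"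
      using eigenvalue_root_char_poly[of "transpose_mat Bc" n] Bccar by simp
    then obtain v where v: "v \<in> carrier_vec n" "v \<noteq> 0\<^sub>v n" "transpose_mat Bc *\<^sub>v v = a \<cdot>\<^sub>v v"
      unfolding eigenvalue_def eigenvector_def using Bccar by auto
    obtain iz where iz: "iz < n" "v $ iz \<noteq> 0"
    proof (rule ccontr)
      assume "\<not> thesis"
      hence "\<And>i. i < n \<Longrightarrow> v $ i = 0" using that by blast
      hence "v = 0\<^sub>v n" using v(1) by (intro eq_vecI) auto
      thus False using v(2) by simp
    qed
    have eig: "(\<Sum>i<n. v $ i * of_real (P (Suc i) (Suc j) - P 0 (Suc j))) = a * v $ j" if j: "j < n" for j
    proof -
      have "(transpose_mat Bc *\<^sub>v v) $ j = (a \<cdot>\<^sub>v v) $ j" using v(3) by simp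
      also have "(a \<cdot>\<^sub>v v) $ j = a * v $ j" using v(1) j by simp
      also have "(transpose_mat Bc *\<^sub>v v) $ j = (\<Sum>i\<in>{0..<n}. Bc $$ (i, j) * v $ i)"
        using j Bccar v(1) by (simp add: scalar_prod_def)
      also have "\<dots> = (\<Sum>i<n. v $ i * of_real (P (Suc i) (Suc j) - P 0 (Suc j)))"
        using j by (auto simp: Bc_def B_def atLeast0LessThan mult.commute intro!: sum.cong)
      finally show ?thesis .
    qed
    show ?thesis
      by (rule left_eig_bound[where y="\<lambda>i. v $ i" and iz=iz, OF wpos rows rev lb eig iz]) auto
  qed
  define rs where "rs = map Re as"
  have as_rs: "as = map complex_of_real rs"
    unfolding rs_def
  proof (rule nth_equalityI)
    fix i assume "i < length as"
    hence "Im (as ! i) = 0" using roots[OF nth_mem] by blast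
    thus "as ! i = map complex_of_real (map Re as) ! i" using \<open>i < length as\<close> by (simp add: complex_eq_iff)
  qed simp
  have rs_bound: "\<bar>r\<bar> \<le> 1 - \<alpha>" if "r \<in> set rs" for r
    using that roots unfolding rs_def by (auto simp: abs_Re_le_cmod intro: order.trans[OF abs_Re_le_cmod])
  have rs_len: "length rs = n" using as(2) by (simp add: rs_def)
  have cpB: "char_poly B = (\<Prod>r\<leftarrow>rs. [:-r, 1:])"
  proof -
    have "poly (char_poly B) x = poly (\<Prod>r\<leftarrow>rs. [:-r, 1:]) x" for x
    proof -
      have "complex_of_real (poly (char_poly B) x) = poly (char_poly Bc) (of_real x)"
        by (simp add: cpBc of_real_hom.poly_map_poly)
      also have "\<dots> = of_real (poly (\<Prod>r\<leftarrow>rs. [:-r, 1:]) x)"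
        unfolding as(1) as_rs by (rule poly_lin_prod_of_real)
      finally show ?thesis by simp
    qed
    thus ?thesis by (intro poly_eq_poly_eq_iff[THEN iffD1]) auto
  qed
  have cpP: "char_poly (mat (Suc n) (Suc n) (\<lambda>(i,j). P i j)) = [:-1, 1:] * (\<Prod>r\<leftarrow>rs. [:-r, 1:])"
    using char_poly_deflate[OF rows] cpB unfolding B_def by simp
  have "proots (char_poly (mat (Suc n) (Suc n) (\<lambda>(i,j). P i j))) = mset (1 # rs)"
  proof -
    have "(\<Prod>r\<leftarrow>rs. [:-r, 1:]) \<noteq> 0" by (auto simp: prod_list_zero_iff)
    moreover have "[:-1, 1:] \<noteq> (0 :: real poly)" by simp
    ultimately have "proots ([:-1, 1:] * (\<Prod>r\<leftarrow>rs. [:-r, 1:])) = proots [:-1, 1:] + proots (\<Prod>r\<leftarrow>rs. [:-r, 1:])"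
      by (intro proots_mult)
    thus ?thesis unfolding cpP by (simp add: proots_linear_prod)
  qed
  hence eigs: "eigs_desc (Suc n) P = 1 # rev (sort rs)"
  proof -
    assume h: "proots (char_poly (mat (Suc n) (Suc n) (\<lambda>(i,j). P i j))) = mset (1 # rs)"
    have lt: "\<forall>x\<in>set (sort rs). x \<le> 1" using rs_bound apos by fastforce
    have "sort (1 # rs) = sort rs @ [1]"
      by (simp add: sorted_insort_is_snoc lt)
    thus ?thesis unfolding eigs_desc_def h sorted_list_of_multiset_mset by simp
  qed
  have e1: "eigs_desc (Suc n) P ! 1 \<in> set rs"
  proof -
    have "eigs_desc (Suc n) P ! 1 = rev (sort rs) ! 0" unfolding eigs by simp
    also have "\<dots> \<in> set (rev (sort rs))" using n1 rs_len by (intro nth_mem) simp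
    finally show ?thesis by simp
  qed
  have e2: "eigs_desc (Suc n) P ! (Suc n - 1) \<in> set rs"
  proof -
    have "eigs_desc (Suc n) P ! (Suc n - 1) = rev (sort rs) ! (n - 1)"
      using n1 unfolding eigs by (cases n) auto
    also have "\<dots> \<in> set rs" using n1 rs_len
      by (metis diff_less length_rev length_sort less_numeral_extra(1) nth_mem order_less_le_trans set_rev set_sort)
    finally show ?thesis .
  qed
  show ?thesis unfolding spectral_gap_def using rs_bound[OF e1] rs_bound[OF e2] by simp
qed

lemma weighted_cs:
  fixes a y :: "nat \<Rightarrow> real"
  assumes "\<And>j. j \<in> A \<Longrightarrow> a j \<ge> 0"
  shows "(\<Sum>j\<in>A. a j * y j)^2 \<le> (\<Sum>j\<in>A. a j) * (\<Sum>j\<in>A. a j * (y j)^2)"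
proof -
  have "(\<Sum>j\<in>A. a j * y j)^2 = (\<Sum>j\<in>A. \<Sum>k\<in>A. (a j * y j) * (a k * y k))"
    by (simp add: power2_eq_square sum_product)
  also have "\<dots> \<le> (\<Sum>j\<in>A. \<Sum>k\<in>A. (a j * a k) * (((y j)^2 + (y k)^2) / 2))"
  proof (intro sum_mono)
    fix j k assume "j \<in> A" "k \<in> A"
    hence nn: "a j * a k \<ge> 0" using assms by simp
    have "y j * y k \<le> ((y j)^2 + (y k)^2) / 2"
      using sum_squares_bound[of "y j" "y k"] by (simp add: power2_eq_square)
    hence "(a j * a k) * (y j * y k) \<le> (a j * a k) * (((y j)^2 + (y k)^2) / 2)"
      by (rule mult_left_mono[OF _ nn])
    thus "a j * y j * (a k * y k) \<le> a j * a k * (((y j)\<^sup>2 + (y k)\<^sup>2) / 2)"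
      by (simp add: mult_ac)
  qed
  also have "\<dots> = (\<Sum>j\<in>A. \<Sum>k\<in>A. a j * (a k * (y j)^2) / 2 + a j * (a k * (y k)^2) / 2)"
    by (intro sum.cong refl) (simp add: field_simps)
  also have "\<dots> = ((\<Sum>j\<in>A. \<Sum>k\<in>A. a j * (a k * (y j)^2)) + (\<Sum>j\<in>A. \<Sum>k\<in>A. a j * (a k * (y k)^2))) / 2"
    by (simp add: sum.distrib sum_divide_distrib add_divide_distrib)
  also have "(\<Sum>j\<in>A. \<Sum>k\<in>A. a j * (a k * (y k)^2)) = (\<Sum>j\<in>A. a j) * (\<Sum>j\<in>A. a j * (y j)^2)"
    by (simp add: sum_product)
  also have "(\<Sum>j\<in>A. \<Sum>k\<in>A. a j * (a k * (y j)^2)) = (\<Sum>j\<in>A. a j * (y j)^2) * (\<Sum>j\<in>A. a j)"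
    unfolding sum_product by (intro sum.cong refl) (simp add: mult_ac)
  finally show ?thesis by simp
qed

lemma spec_norm_le:
  fixes D :: "nat \<Rightarrow> nat \<Rightarrow> real"
  assumes R: "R \<ge> 0"
  and rowb: "\<And>i. i < m \<Longrightarrow> (\<Sum>j<m. \<bar>D i j\<bar>) \<le> R"
  and colb: "\<And>j. j < m \<Longrightarrow> (\<Sum>i<m. \<bar>D i j\<bar>) \<le> R"
  shows "spec_norm m D \<le> R"
  unfolding spec_norm_def
proof (rule cSup_least)
  show "{sqrt (\<Sum>i<m. (\<Sum>j<m. D i j * x j)\<^sup>2) |x. (\<Sum>j<m. (x j)\<^sup>2) \<le> 1} \<noteq> {}"
  proof -
    have "sqrt (\<Sum>i<m. (\<Sum>j<m. D i j * (\<lambda>_. 0) j)\<^sup>2) \<in> {sqrt (\<Sum>i<m. (\<Sum>j<m. D i j * x j)\<^sup>2) |x. (\<Sum>j<m. (x j)\<^sup>2) \<le> 1}"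
      by (rule CollectI, rule exI[of _ "\<lambda>_. 0"]) simp
    thus ?thesis by blast
  qed
next
  fix s assume "s \<in> {sqrt (\<Sum>i<m. (\<Sum>j<m. D i j * x j)\<^sup>2) |x. (\<Sum>j<m. (x j)\<^sup>2) \<le> 1}"
  then obtain x where s: "s = sqrt (\<Sum>i<m. (\<Sum>j<m. D i j * x j)\<^sup>2)" and x: "(\<Sum>j<m. (x j)\<^sup>2) \<le> 1" by blast
  have row: "(\<Sum>j<m. D i j * x j)\<^sup>2 \<le> R * (\<Sum>j<m. \<bar>D i j\<bar> * (x j)^2)" if i: "i < m" for i
  proof -
    have "\<bar>\<Sum>j<m. D i j * x j\<bar> \<le> (\<Sum>j<m. \<bar>D i j\<bar> * \<bar>x j\<bar>)"
      by (rule order.trans[OF sum_abs]) (simp add: abs_mult)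
    hence "(\<Sum>j<m. D i j * x j)\<^sup>2 \<le> (\<Sum>j<m. \<bar>D i j\<bar> * \<bar>x j\<bar>)^2"
      by (metis abs_ge_zero order_trans power2_abs power_mono)
    also have "\<dots> \<le> (\<Sum>j<m. \<bar>D i j\<bar>) * (\<Sum>j<m. \<bar>D i j\<bar> * \<bar>x j\<bar>^2)"
      by (rule weighted_cs) simp
    also have "\<dots> \<le> R * (\<Sum>j<m. \<bar>D i j\<bar> * (x j)^2)"
      using rowb[OF i] by (simp add: power2_abs mult_right_mono sum_nonneg)
    finally show ?thesis .
  qed
  have "(\<Sum>i<m. (\<Sum>j<m. D i j * x j)\<^sup>2) \<le> (\<Sum>i<m. R * (\<Sum>j<m. \<bar>D i j\<bar> * (x j)^2))"
    by (intro sum_mono row) simp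
  also have "\<dots> = R * (\<Sum>j<m. (\<Sum>i<m. \<bar>D i j\<bar>) * (x j)^2)"
  proof -
    have "(\<Sum>i<m. R * (\<Sum>j<m. \<bar>D i j\<bar> * (x j)^2)) = R * (\<Sum>i<m. \<Sum>j<m. \<bar>D i j\<bar> * (x j)^2)"
      by (simp add: sum_distrib_left)
    also have "(\<Sum>i<m. \<Sum>j<m. \<bar>D i j\<bar> * (x j)^2) = (\<Sum>j<m. \<Sum>i<m. \<bar>D i j\<bar> * (x j)^2)"
      by (rule sum.swap)
    also have "\<dots> = (\<Sum>j<m. (\<Sum>i<m. \<bar>D i j\<bar>) * (x j)^2)"
      by (simp add: sum_distrib_right)
    finally show ?thesis .
  qed
  also have "\<dots> \<le> R * (\<Sum>j<m. R * (x j)^2)"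
    by (intro mult_left_mono[OF _ R] sum_mono mult_right_mono colb) auto
  also have "\<dots> = R * R * (\<Sum>j<m. (x j)^2)" by (simp add: sum_distrib_left mult.assoc)
  also have "\<dots> \<le> R * R * 1" by (intro mult_left_mono x) (use R in simp)
  finally have "(\<Sum>i<m. (\<Sum>j<m. D i j * x j)\<^sup>2) \<le> R^2" by (simp add: power2_eq_square)
  hence "s \<le> sqrt (R^2)" unfolding s by (rule real_sqrt_le_mono)
  thus "s \<le> R" using R by simp
qed

lemma exp_pair:
  fixes Q :: "nat \<Rightarrow> nat \<Rightarrow> real"
  assumes l: "l < n" and i: "i < m" and j: "j < m" and ij: "i \<noteq> j"
  and Q: "\<And>l i. 0 \<le> Q l i \<and> Q l i \<le> 1"
  shows "measure_pmf.expectation (Pi_pmf ({..<n}\<times>{..<m}) False (\<lambda>(l,i). bernoulli_pmf (Q l i)))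
           (\<lambda>X. of_bool (X (l,i)) * (1 - of_bool (X (l,j)))) = Q l i * (1 - Q l j)"
proof -
  define I where "I = {..<n}\<times>{..<m}"
  define F where "F x v = (if x = (l,i) then of_bool v else if x = (l,j) then 1 - of_bool v else (1::real))" for x v
  have fin: "finite I" unfolding I_def by simp
  have sub: "{(l,i),(l,j)} \<subseteq> I" unfolding I_def using l i j by auto
  have prodF: "(\<Prod>x\<in>I. F x (X x)) = of_bool (X (l,i)) * (1 - of_bool (X (l,j)))" for X
  proof -
    have "(\<Prod>x\<in>I. F x (X x)) = (\<Prod>x\<in>{(l,i),(l,j)}. F x (X x))"
      by (rule prod.mono_neutral_right[OF fin sub]) (auto simp: F_def)
    also have "\<dots> = of_bool (X (l,i)) * (1 - of_bool (X (l,j)))" using ij by (simp add: F_def)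
    finally show ?thesis .
  qed
  have "measure_pmf.expectation (Pi_pmf I False (\<lambda>(l,i). bernoulli_pmf (Q l i))) (\<lambda>X. \<Prod>x\<in>I. F x (X x))
      = (\<Prod>x\<in>I. measure_pmf.expectation ((\<lambda>(l,i). bernoulli_pmf (Q l i)) x) (\<lambda>v. F x v))"
    by (rule expectation_prod_Pi_pmf[OF fin]) (auto simp: F_def intro!: integrable_measure_pmf_finite)
  also have "\<dots> = (\<Prod>x\<in>{(l,i),(l,j)}. measure_pmf.expectation ((\<lambda>(l,i). bernoulli_pmf (Q l i)) x) (\<lambda>v. F x v))"
    by (rule prod.mono_neutral_right[OF fin sub]) (auto simp: F_def)
  also have "\<dots> = Q l i * (1 - Q l j)"
    using ij Q[of l i] Q[of l j] by (simp add: F_def integral_bernoulli_pmf)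
  finally have h: "measure_pmf.expectation (Pi_pmf I False (\<lambda>(l,i). bernoulli_pmf (Q l i))) (\<lambda>X. \<Prod>x\<in>I. F x (X x)) = Q l i * (1 - Q l j)" .
  have "(\<lambda>X. \<Prod>x\<in>I. F x (X x)) = (\<lambda>X. of_bool (X (l,i)) * (1 - of_bool (X (l,j))))" using prodF by auto
  with h show ?thesis by (simp add: I_def)
qed

lemma hoeff_pair:
  fixes Q :: "nat \<Rightarrow> nat \<Rightarrow> real" and A :: "nat \<Rightarrow> nat \<Rightarrow> bool"
  assumes i: "i < m" and j: "j < m" and ij: "i \<noteq> j"
  and Q: "\<And>l i. 0 \<le> Q l i \<and> Q l i \<le> 1"
  and eps: "\<epsilon> \<ge> 0"
  and cpos: "card {l. l < n \<and> A l i \<and> A l j} > 0"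
  shows "measure_pmf.prob (Pi_pmf ({..<n}\<times>{..<m}) False (\<lambda>(l,i). bernoulli_pmf (Q l i)))
      {X. \<epsilon> \<le> \<bar>(\<Sum>l<n. of_bool (A l i) * of_bool (A l j) * of_bool (X (l, i)) * (1 - of_bool (X (l, j))))
              - (\<Sum>l<n. of_bool (A l i) * of_bool (A l j) * (Q l i * (1 - Q l j)))\<bar>}
    \<le> 2 * exp (- 2 * \<epsilon>^2 / real (card {l. l < n \<and> A l i \<and> A l j}))"
proof -
  define I where "I = {..<n}\<times>{..<m}"
  define Mp where "Mp = Pi_pmf I False (\<lambda>(l,i). bernoulli_pmf (Q l i))"
  define c where "c l = (of_bool (A l i) * of_bool (A l j) :: real)" for l
  define Y where "Y l X = c l * (of_bool (X (l, i)) * (1 - of_bool (X (l, j))))" for l and X :: "nat \<times> nat \<Rightarrow> bool"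
  interpret prob_space "measure_pmf Mp" by (rule measure_pmf.prob_space_axioms)
  have finI: "finite I" unfolding I_def by simp
  have ind0: "prob_space.indep_vars (measure_pmf Mp) (\<lambda>_. count_space (UNIV :: bool set)) (\<lambda>x (f :: nat \<times> nat \<Rightarrow> bool). f x) I"
    using indep_vars_Pi_pmf[OF finI, of False "\<lambda>(l,i). bernoulli_pmf (Q l i)"] unfolding Mp_def .
  define K where "K l = {(l,i),(l,j)}" for l :: nat
  have ind1: "prob_space.indep_vars (measure_pmf Mp) (\<lambda>l. PiM (K l) (\<lambda>_. count_space (UNIV :: bool set))) (\<lambda>l \<omega>. restrict (\<lambda>x. \<omega> x) (K l)) {..<n}"
  proof (rule prob_space.indep_vars_restrict[OF measure_pmf.prob_space_axioms ind0])
    show "\<And>l. l \<in> {..<n} \<Longrightarrow> K l \<subseteq> I" unfolding K_def I_def using i j by auto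
    show "disjoint_family_on K {..<n}" unfolding K_def disjoint_family_on_def by auto
  qed
  define Z where "Z l g = c l * (of_bool (g (l, i)) * (1 - of_bool (g (l, j))))" for l and g :: "nat \<times> nat \<Rightarrow> bool"
  have Zm: "Z l \<in> borel_measurable (PiM (K l) (\<lambda>_. count_space (UNIV :: bool set)))" for l
  proof -
    have m1: "(\<lambda>g. k (g x)) \<in> borel_measurable (PiM (K l) (\<lambda>_. count_space (UNIV :: bool set)))" if "x \<in> K l" for x and k :: "bool \<Rightarrow> real"
      by (rule measurable_compose[OF measurable_component_singleton[OF that] borel_measurable_count_space])
    show ?thesis unfolding Z_def
      by (intro borel_measurable_times borel_measurable_const m1) (auto simp: K_def)
  qed
  have ind2: "prob_space.indep_vars (measure_pmf Mp) (\<lambda>_. borel) (\<lambda>l \<omega>. Z l (restrict (\<lambda>x. \<omega> x) (K l))) {..<n}"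
    by (rule prob_space.indep_vars_compose2[OF measure_pmf.prob_space_axioms ind1 Zm])
  have ind3: "prob_space.indep_vars (measure_pmf Mp) (\<lambda>_. borel) Y {..<n}"
  proof -
    have "prob_space.indep_vars (measure_pmf Mp) (\<lambda>_. borel) (\<lambda>l \<omega>. Z l (restrict (\<lambda>x. \<omega> x) (K l))) {..<n} = prob_space.indep_vars (measure_pmf Mp) (\<lambda>_. borel) Y {..<n}"
      by (rule prob_space.indep_vars_cong[OF measure_pmf.prob_space_axioms]) (auto simp: Z_def Y_def K_def fun_eq_iff)
    with ind2 show ?thesis by simp
  qed
  have EY: "measure_pmf.expectation Mp (Y l) = c l * (Q l i * (1 - Q l j))" if l: "l < n" for l
  proof -
    have "measure_pmf.expectation Mp (Y l) = c l * measure_pmf.expectation Mp (\<lambda>X. of_bool (X (l, i)) * (1 - of_bool (X (l, j))))"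
      unfolding Y_def by (rule integral_mult_right_zero)
    also have "\<dots> = c l * (Q l i * (1 - Q l j))"
      unfolding Mp_def I_def using exp_pair[OF l i j ij Q] by simp
    finally show ?thesis .
  qed
  interpret H: Hoeffding_ineq "measure_pmf Mp" "{..<n}" Y "\<lambda>_. 0" c "\<Sum>l<n. measure_pmf.expectation Mp (Y l)"
    using ind3 by unfold_locales (auto simp: Y_def c_def intro!: AE_I2)
  have csum: "(\<Sum>l<n. (c l - 0)\<^sup>2) = real (card {l. l < n \<and> A l i \<and> A l j})"
  proof -
    have "(\<Sum>l<n. (c l - 0)\<^sup>2) = (\<Sum>l<n. of_bool (A l i \<and> A l j))"
      by (intro sum.cong refl) (simp add: c_def)
    also have "\<dots> = real (card ({..<n} \<inter> {l. A l i \<and> A l j}))" by (rule sum_of_bool_eq) simp_all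
    also have "{..<n} \<inter> {l. A l i \<and> A l j} = {l. l < n \<and> A l i \<and> A l j}" by auto
    finally show ?thesis .
  qed
  have H: "measure_pmf.prob Mp {x \<in> space (measure_pmf Mp). \<epsilon> \<le> \<bar>(\<Sum>l<n. Y l x) - (\<Sum>l<n. measure_pmf.expectation Mp (Y l))\<bar>}
        \<le> 2 * exp (- 2 * \<epsilon>\<^sup>2 / (\<Sum>l<n. (c l - 0)\<^sup>2))"
    by (rule H.Hoeffding_ineq_abs_ge[OF eps]) (use cpos csum in simp)
  have eq: "{x \<in> space (measure_pmf Mp). \<epsilon> \<le> \<bar>(\<Sum>l<n. Y l x) - (\<Sum>l<n. measure_pmf.expectation Mp (Y l))\<bar>}
     = {X. \<epsilon> \<le> \<bar>(\<Sum>l<n. of_bool (A l i) * of_bool (A l j) * of_bool (X (l, i)) * (1 - of_bool (X (l, j))))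
              - (\<Sum>l<n. of_bool (A l i) * of_bool (A l j) * (Q l i * (1 - Q l j)))\<bar>}"
  proof -
    have "(\<Sum>l<n. measure_pmf.expectation Mp (Y l)) = (\<Sum>l<n. of_bool (A l i) * of_bool (A l j) * (Q l i * (1 - Q l j)))"
      by (intro sum.cong refl) (simp add: EY c_def)
    moreover have "(\<Sum>l<n. Y l X) = (\<Sum>l<n. of_bool (A l i) * of_bool (A l j) * of_bool (X (l, i)) * (1 - of_bool (X (l, j))))" for X
      by (intro sum.cong refl) (simp add: Y_def c_def mult.assoc)
    ultimately show ?thesis by simp
  qed
  from H have "measure_pmf.prob Mp {X. \<epsilon> \<le> \<bar>(\<Sum>l<n. of_bool (A l i) * of_bool (A l j) * of_bool (X (l, i)) * (1 - of_bool (X (l, j))))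
              - (\<Sum>l<n. of_bool (A l i) * of_bool (A l j) * (Q l i * (1 - Q l j)))\<bar>}
    \<le> 2 * exp (- 2 * \<epsilon>^2 / real (card {l. l < n \<and> A l i \<and> A l j}))"
    by (simp only: eq csum)
  thus ?thesis unfolding Mp_def I_def .
qed

lemma rows_complete_diag:
  assumes "i < m"
  shows "(\<Sum>j<m. complete_diag m Q i j) = 1"
proof -
  have "(\<Sum>j<m. complete_diag m Q i j) = complete_diag m Q i i + (\<Sum>j\<in>{..<m} - {i}. complete_diag m Q i j)"
    using assms by (subst sum.remove[of _ i]) auto
  also have "(\<Sum>j\<in>{..<m} - {i}. complete_diag m Q i j) = (\<Sum>j\<in>{..<m} - {i}. Q i j)"
    by (intro sum.cong refl) (auto simp: complete_diag_def)
  finally show ?thesis by (simp add: complete_diag_def)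
qed

lemma resp_prob_bounds: "0 < resp_prob \<theta> \<beta> l i" "resp_prob \<theta> \<beta> l i < 1"
  unfolding resp_prob_def by (auto simp: add_pos_pos)

lemma aux1: fixes a u :: real assumes "a+u>0" shows "1 - a/(a+u) = u/(a+u)"
  using assms by (simp add: diff_divide_distrib[symmetric] divide_simps)

lemma aux2: fixes a u v :: real assumes "a+u>0" "a+v>0"
  shows "u * (a / (a + u) * (1 - a / (a + v))) = v * (a / (a + v) * (1 - a / (a + u)))"
  using assms by (simp add: aux1 mult_ac)

lemma resp_prob_sym:
  "exp (\<beta> i) * (resp_prob \<theta> \<beta> l i * (1 - resp_prob \<theta> \<beta> l j))
   = exp (\<beta> j) * (resp_prob \<theta> \<beta> l j * (1 - resp_prob \<theta> \<beta> l i))"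
  unfolding resp_prob_def by (rule aux2) (simp_all add: add_pos_pos)

lemma sum_filter_bool:
  fixes f :: "nat \<Rightarrow> real"
  shows "(\<Sum>l<n. of_bool (A l i) * of_bool (A l j) * f l) = (\<Sum>l\<in>{l. l < n \<and> A l i \<and> A l j}. f l)"
proof -
  have "{l. l < n \<and> A l i \<and> A l j} = {l \<in> {..<n}. A l i \<and> A l j}" by auto
  moreover have "(\<Sum>l\<in>{l \<in> {..<n}. A l i \<and> A l j}. f l) = (\<Sum>l<n. if A l i \<and> A l j then f l else 0)"
    by (rule sum.inter_filter) simp
  ultimately have "(\<Sum>l\<in>{l. l < n \<and> A l i \<and> A l j}. f l) = (\<Sum>l<n. if A l i \<and> A l j then f l else 0)"
    by simp
  moreover have "(\<Sum>l<n. of_bool (A l i) * of_bool (A l j) * f l) = (\<Sum>l<n. if A l i \<and> A l j then f l else 0)"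
    by (rule sum.cong[OF refl]) simp
  ultimately show ?thesis by simp
qed

context
  fixes n m :: nat and \<theta> \<beta> :: "nat \<Rightarrow> real"
  assumes n1: "n \<ge> 1" and m2: "m \<ge> 2"
begin

definition "GG = {resp_prob \<theta> \<beta> l i * (1 - resp_prob \<theta> \<beta> l j) | l i j. l < n \<and> i < m \<and> j < m \<and> i \<noteq> j}"

lemma GG_fin: "finite GG"
proof -
  have "GG \<subseteq> (\<lambda>(l,i,j). resp_prob \<theta> \<beta> l i * (1 - resp_prob \<theta> \<beta> l j)) ` ({..<n}\<times>{..<m}\<times>{..<m})"
  proof (rule subsetI)
    fix x assume "x \<in> GG"
    then obtain l i j where "x = resp_prob \<theta> \<beta> l i * (1 - resp_prob \<theta> \<beta> l j)" "l < n" "i < m" "j < m"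
      unfolding GG_def by auto
    thus "x \<in> (\<lambda>(l,i,j). resp_prob \<theta> \<beta> l i * (1 - resp_prob \<theta> \<beta> l j)) ` ({..<n}\<times>{..<m}\<times>{..<m})"
      by (intro image_eqI[where x="(l,i,j)"]) auto
  qed
  thus ?thesis by (rule finite_subset) simp
qed

lemma GG_ne: "resp_prob \<theta> \<beta> 0 0 * (1 - resp_prob \<theta> \<beta> 0 1) \<in> GG"
  unfolding GG_def using n1 m2 by (intro CollectI exI[of _ 0] exI[of _ 1]) auto

lemma gamma_le: "l < n \<Longrightarrow> i < m \<Longrightarrow> j < m \<Longrightarrow> i \<noteq> j \<Longrightarrow>
    gamma_min n m \<theta> \<beta> \<le> resp_prob \<theta> \<beta> l i * (1 - resp_prob \<theta> \<beta> l j)"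
  unfolding gamma_min_def GG_def[symmetric] by (rule Min_le[OF GG_fin]) (auto simp: GG_def)

lemma gamma_pos: "0 < gamma_min n m \<theta> \<beta>" and gamma_le1: "gamma_min n m \<theta> \<beta> \<le> 1"
proof -
  have "gamma_min n m \<theta> \<beta> \<in> GG" unfolding gamma_min_def GG_def[symmetric]
    using GG_fin GG_ne by (intro Min_in) auto
  then obtain l i j where "gamma_min n m \<theta> \<beta> = resp_prob \<theta> \<beta> l i * (1 - resp_prob \<theta> \<beta> l j)"
    unfolding GG_def by auto
  moreover have "0 < resp_prob \<theta> \<beta> l i * (1 - resp_prob \<theta> \<beta> l j)"
    using resp_prob_bounds[of \<theta> \<beta> l i] resp_prob_bounds[of \<theta> \<beta> l j] by simp
  moreover have "resp_prob \<theta> \<beta> l i * (1 - resp_prob \<theta> \<beta> l j) \<le> 1"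
    using resp_prob_bounds[of \<theta> \<beta> l i] resp_prob_bounds[of \<theta> \<beta> l j]
    by (simp add: mult_le_one)
  ultimately show "0 < gamma_min n m \<theta> \<beta>" "gamma_min n m \<theta> \<beta> \<le> 1" by auto
qed

lemma kappa_diff: "i < m \<Longrightarrow> j < m \<Longrightarrow> \<beta> i - \<beta> j \<le> kappa m \<beta>"
proof -
  assume "i < m" "j < m"
  hence "\<beta> i \<le> Max (\<beta> ` {..<m})" "Min (\<beta> ` {..<m}) \<le> \<beta> j" by auto
  thus ?thesis unfolding kappa_def by simp
qed

lemma kappa_nonneg: "0 \<le> kappa m \<beta>"
  using kappa_diff[of 0 0] m2 by simp

end

context
  fixes n m :: nat and p :: real and \<theta> \<beta> :: "nat \<Rightarrow> real" and A :: "nat \<Rightarrow> nat \<Rightarrow> bool"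
  assumes n1: "n \<ge> 1" and m2: "m \<ge> 2" and p0: "0 < p" and p1: "p \<le> 1"
    and eventA: "\<And>i j. i < m \<Longrightarrow> j < m \<Longrightarrow> i \<noteq> j \<Longrightarrow>
        1/2 * real n * p^2 \<le> real (card {l. l < n \<and> A l i \<and> A l j}) \<and>
        real (card {l. l < n \<and> A l i \<and> A l j}) \<le> 3/2 * real n * p^2"
begin

definition "Qs i j = (1 / (3/2 * real m * real n * p^2)) *
      (\<Sum>l<n. of_bool (A l i) * of_bool (A l j) * (resp_prob \<theta> \<beta> l i * (1 - resp_prob \<theta> \<beta> l j)))"

lemma Pstar_eq: "P_star n m p A \<theta> \<beta> = complete_diag m Qs"
  unfolding P_star_def Qs_def ..

lemma npos: "0 < real n * p^2" using n1 p0 by simp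

lemma Qs_bounds:
  assumes i: "i < m" and j: "j < m" and ij: "i \<noteq> j"
  shows "gamma_min n m \<theta> \<beta> / (3 * real m) \<le> Qs i j" "Qs i j \<le> 1 / real m"
proof -
  define C where "C = {l. l < n \<and> A l i \<and> A l j}"
  define S where "S = (\<Sum>l<n. of_bool (A l i) * of_bool (A l j) * (resp_prob \<theta> \<beta> l i * (1 - resp_prob \<theta> \<beta> l j)))"
  have SC: "S = (\<Sum>l\<in>C. resp_prob \<theta> \<beta> l i * (1 - resp_prob \<theta> \<beta> l j))"
    unfolding S_def C_def by (rule sum_filter_bool)
  have cb: "1/2 * real n * p^2 \<le> real (card C)" "real (card C) \<le> 3/2 * real n * p^2"
    using eventA[OF i j ij] unfolding C_def by auto
  have lo: "real (card C) * gamma_min n m \<theta> \<beta> \<le> S" unfolding SC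
    by (rule sum_bounded_below) (use gamma_le[OF n1 m2 _ i j ij] in \<open>auto simp: C_def\<close>)
  have hi: "S \<le> real (card C) * 1" unfolding SC
  proof (rule sum_bounded_above)
    fix l
    show "resp_prob \<theta> \<beta> l i * (1 - resp_prob \<theta> \<beta> l j) \<le> 1"
      using resp_prob_bounds[of \<theta> \<beta> l i] resp_prob_bounds[of \<theta> \<beta> l j] by (simp add: mult_le_one)
  qed
  have g: "0 < gamma_min n m \<theta> \<beta>" using gamma_pos[OF n1 m2] .
  have mpos: "0 < real m" using m2 by simp
  have d: "0 < 3/2 * real m * real n * p^2" using npos mpos by simp
  have "gamma_min n m \<theta> \<beta> / (3 * real m) = (1/2 * real n * p^2) * gamma_min n m \<theta> \<beta> / (3/2 * real m * real n * p^2)"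
    using n1 p0 mpos by (simp add: field_simps)
  also have "\<dots> \<le> S / (3/2 * real m * real n * p^2)"
    using lo cb(1) g d by (intro divide_right_mono order.trans[OF mult_right_mono[OF cb(1)] lo]) auto
  also have "\<dots> = Qs i j" unfolding Qs_def S_def by simp
  finally show "gamma_min n m \<theta> \<beta> / (3 * real m) \<le> Qs i j" .
  have "Qs i j = S / (3/2 * real m * real n * p^2)" unfolding Qs_def S_def by simp
  also have "\<dots> \<le> (3/2 * real n * p^2) / (3/2 * real m * real n * p^2)"
    using hi cb(2) d by (intro divide_right_mono) auto
  also have "\<dots> = 1 / real m" using n1 p0 mpos by (simp add: field_simps)
  finally show "Qs i j \<le> 1 / real m" .
qed

lemma Qs_nonneg: "0 \<le> Qs i j"
  unfolding Qs_def using resp_prob_bounds[of \<theta> \<beta>] npos m2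
  by (intro mult_nonneg_nonneg sum_nonneg) (auto intro!: mult_nonneg_nonneg less_imp_le simp: algebra_simps)

lemma Pstar_diag: assumes i: "i < m" shows "1 / real m \<le> P_star n m p A \<theta> \<beta> i i"
proof -
  have "(\<Sum>k\<in>{..<m} - {i}. Qs i k) \<le> (\<Sum>k\<in>{..<m} - {i}. 1 / real m)"
    by (intro sum_mono Qs_bounds(2)) (use i in auto)
  also have "\<dots> = (real m - 1) / real m" using i by (simp add: card_Diff_singleton of_nat_diff)
  finally have "(\<Sum>k\<in>{..<m} - {i}. Qs i k) \<le> (real m - 1) / real m" .
  moreover have "1 - (real m - 1) / real m = 1 / real m" using m2 by (simp add: field_simps)
  ultimately show ?thesis unfolding Pstar_eq complete_diag_def by simp
qed

lemma Pstar_rev: "exp (\<beta> i) * P_star n m p A \<theta> \<beta> i j = exp (\<beta> j) * P_star n m p A \<theta> \<beta> j i"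
proof (cases "i = j")
  case False
  define c where "c = 1 / (3/2 * real m * real n * p^2)"
  have "exp (\<beta> i) * Qs i j = c * (\<Sum>l<n. of_bool (A l i) * of_bool (A l j) * (exp (\<beta> i) * (resp_prob \<theta> \<beta> l i * (1 - resp_prob \<theta> \<beta> l j))))"
    unfolding Qs_def c_def sum_distrib_left by (rule sum.cong[OF refl]) (simp add: mult_ac)
  also have "\<dots> = c * (\<Sum>l<n. of_bool (A l j) * of_bool (A l i) * (exp (\<beta> j) * (resp_prob \<theta> \<beta> l j * (1 - resp_prob \<theta> \<beta> l i))))"
  proof (intro arg_cong[where f="\<lambda>x. c * x"] sum.cong refl)
    fix l
    have "exp (\<beta> i) * (resp_prob \<theta> \<beta> l i * (1 - resp_prob \<theta> \<beta> l j)) = exp (\<beta> j) * (resp_prob \<theta> \<beta> l j * (1 - resp_prob \<theta> \<beta> l i))"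
      by (rule resp_prob_sym)
    thus "of_bool (A l i) * of_bool (A l j) * (exp (\<beta> i) * (resp_prob \<theta> \<beta> l i * (1 - resp_prob \<theta> \<beta> l j))) =
          of_bool (A l j) * of_bool (A l i) * (exp (\<beta> j) * (resp_prob \<theta> \<beta> l j * (1 - resp_prob \<theta> \<beta> l i)))"
      by simp
  qed
  also have "\<dots> = exp (\<beta> j) * Qs j i"
    unfolding Qs_def c_def sum_distrib_left by (rule sum.cong[OF refl]) (simp add: mult_ac)
  finally have "exp (\<beta> i) * Qs i j = exp (\<beta> j) * Qs j i" .
  thus ?thesis using False unfolding Pstar_eq complete_diag_def by simp
qed simp

lemma W_bound: assumes j: "j < m"
  shows "real m * exp (\<beta> j) \<le> exp (kappa m \<beta>) * (\<Sum>k<m. exp (\<beta> k))"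
proof -
  have "real m * exp (\<beta> j) = (\<Sum>k<m. exp (\<beta> j))" by simp
  also have "\<dots> \<le> (\<Sum>k<m. exp (kappa m \<beta>) * exp (\<beta> k))"
  proof (intro sum_mono)
    fix k assume "k \<in> {..<m}"
    hence "\<beta> j \<le> kappa m \<beta> + \<beta> k" using kappa_diff[OF n1 m2 j, where \<beta>=\<beta> and j=k] by simp
    thus "exp (\<beta> j) \<le> exp (kappa m \<beta>) * exp (\<beta> k)" by (simp add: exp_add[symmetric])
  qed
  also have "\<dots> = exp (kappa m \<beta>) * (\<Sum>k<m. exp (\<beta> k))" by (simp add: sum_distrib_left)
  finally show ?thesis .
qed

lemma Pstar_ge: assumes i: "i < m" and j: "j < m"
  shows "gamma_min n m \<theta> \<beta> / (3 * real m) \<le> P_star n m p A \<theta> \<beta> i j"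
proof (cases "i = j")
  case True
  have "gamma_min n m \<theta> \<beta> / (3 * real m) \<le> 1 / real m"
    using gamma_le1[OF n1 m2, where \<theta>=\<theta> and \<beta>=\<beta>] m2 by (simp add: divide_simps)
  also have "\<dots> \<le> P_star n m p A \<theta> \<beta> i j" using Pstar_diag[OF i] True by simp
  finally show ?thesis .
next
  case False
  thus ?thesis using Qs_bounds(1)[OF i j False] unfolding Pstar_eq complete_diag_def by simp
qed

lemma Pstar_lb: assumes i: "i < m" and j: "j < m"
  shows "gamma_min n m \<theta> \<beta> / (3 * exp (kappa m \<beta>)) * exp (\<beta> j) \<le> P_star n m p A \<theta> \<beta> i j * (\<Sum>k<m. exp (\<beta> k))"
proof -
  define g where "g = gamma_min n m \<theta> \<beta>"
  define W where "W = (\<Sum>k<m. exp (\<beta> k))"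
  have g: "0 < g" unfolding g_def by (rule gamma_pos[OF n1 m2])
  have mpos: "0 < real m" using m2 by simp
  have W: "0 \<le> W" unfolding W_def by (intro sum_nonneg) auto
  have "g / (3 * exp (kappa m \<beta>)) * exp (\<beta> j) = (g / (3 * real m)) * ((real m * exp (\<beta> j)) / exp (kappa m \<beta>))"
    using mpos by (simp add: field_simps)
  also have "\<dots> \<le> (g / (3 * real m)) * W"
    using W_bound[OF j] g mpos unfolding W_def by (intro mult_left_mono) (auto simp: divide_simps mult.commute)
  also have "\<dots> \<le> P_star n m p A \<theta> \<beta> i j * W"
    using Pstar_ge[OF i j] W unfolding g_def by (intro mult_right_mono) auto
  finally show ?thesis unfolding g_def W_def .
qed

lemma Pstar_rows: "i < m \<Longrightarrow> (\<Sum>j<m. P_star n m p A \<theta> \<beta> i j) = 1"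
  unfolding Pstar_eq by (rule rows_complete_diag)

lemma gap_Pstar: "gamma_min n m \<theta> \<beta> / (3 * exp (kappa m \<beta>)) \<le> spectral_gap m (P_star n m p A \<theta> \<beta>)"
proof -
  obtain m' where m': "m = Suc m'" using m2 by (cases m) auto
  have "gamma_min n m \<theta> \<beta> / (3 * exp (kappa m \<beta>)) \<le> spectral_gap (Suc m') (P_star n m p A \<theta> \<beta>)"
  proof (rule gap_lemma)
    show "1 \<le> m'" using m2 m' by simp
    show "0 < gamma_min n m \<theta> \<beta> / (3 * exp (kappa m \<beta>))" using gamma_pos[OF n1 m2, where \<theta>=\<theta> and \<beta>=\<beta>] by simp
    show "\<And>i. i < Suc m' \<Longrightarrow> 0 < exp (\<beta> i)" by simp
    show "\<And>i. i < Suc m' \<Longrightarrow> (\<Sum>j<Suc m'. P_star n m p A \<theta> \<beta> i j) = 1" using Pstar_rows m' by simp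
    show "\<And>i j. i < Suc m' \<Longrightarrow> j < Suc m' \<Longrightarrow> exp (\<beta> i) * P_star n m p A \<theta> \<beta> i j = exp (\<beta> j) * P_star n m p A \<theta> \<beta> j i"
      by (rule Pstar_rev)
    show "\<And>i j. i < Suc m' \<Longrightarrow> j < Suc m' \<Longrightarrow> gamma_min n m \<theta> \<beta> / (3 * exp (kappa m \<beta>)) * exp (\<beta> j)
        \<le> P_star n m p A \<theta> \<beta> i j * (\<Sum>k<Suc m'. exp (\<beta> k))"
      using Pstar_lb m' by simp
  qed
  thus ?thesis using m' by simp
qed

end

lemma D_bounds:
  fixes D :: "nat \<Rightarrow> nat \<Rightarrow> real"
  assumes off: "\<And>i j. i < m \<Longrightarrow> j < m \<Longrightarrow> i \<noteq> j \<Longrightarrow> \<bar>D i j\<bar> \<le> t"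
  and diag: "\<And>i. i < m \<Longrightarrow> D i i = - (\<Sum>k\<in>{..<m} - {i}. D i k)"
  shows "\<And>i. i < m \<Longrightarrow> (\<Sum>j<m. \<bar>D i j\<bar>) \<le> 2 * (real m - 1) * t"
    and "\<And>j. j < m \<Longrightarrow> (\<Sum>i<m. \<bar>D i j\<bar>) \<le> 2 * (real m - 1) * t"
proof -
  have offsum: "(\<Sum>k\<in>{..<m} - {i}. \<bar>D i k\<bar>) \<le> (real m - 1) * t" if i: "i < m" for i
  proof -
    have "(\<Sum>k\<in>{..<m} - {i}. \<bar>D i k\<bar>) \<le> (\<Sum>k\<in>{..<m} - {i}. t)"
      by (intro sum_mono off) (use i in auto)
    also have "\<dots> = (real m - 1) * t" using i by (simp add: card_Diff_singleton of_nat_diff)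
    finally show ?thesis .
  qed
  have offsum2: "(\<Sum>k\<in>{..<m} - {j}. \<bar>D k j\<bar>) \<le> (real m - 1) * t" if j: "j < m" for j
  proof -
    have "(\<Sum>k\<in>{..<m} - {j}. \<bar>D k j\<bar>) \<le> (\<Sum>k\<in>{..<m} - {j}. t)"
      by (intro sum_mono off) (use j in auto)
    also have "\<dots> = (real m - 1) * t" using j by (simp add: card_Diff_singleton of_nat_diff)
    finally show ?thesis .
  qed
  have dg: "\<bar>D i i\<bar> \<le> (real m - 1) * t" if i: "i < m" for i
  proof -
    have "\<bar>D i i\<bar> = \<bar>\<Sum>k\<in>{..<m} - {i}. D i k\<bar>" using diag[OF i] by simp
    also have "\<dots> \<le> (\<Sum>k\<in>{..<m} - {i}. \<bar>D i k\<bar>)" by (rule sum_abs)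
    finally show ?thesis using offsum[OF i] by simp
  qed
  show "(\<Sum>j<m. \<bar>D i j\<bar>) \<le> 2 * (real m - 1) * t" if i: "i < m" for i
  proof -
    have "(\<Sum>j<m. \<bar>D i j\<bar>) = \<bar>D i i\<bar> + (\<Sum>j\<in>{..<m} - {i}. \<bar>D i j\<bar>)"
      using i by (subst sum.remove[of _ i]) auto
    also have "\<dots> \<le> (real m - 1) * t + (real m - 1) * t" using dg[OF i] offsum[OF i] by linarith
    finally show ?thesis by (simp add: algebra_simps)
  qed
  show "(\<Sum>i<m. \<bar>D i j\<bar>) \<le> 2 * (real m - 1) * t" if j: "j < m" for j
  proof -
    have "(\<Sum>i<m. \<bar>D i j\<bar>) = \<bar>D j j\<bar> + (\<Sum>i\<in>{..<m} - {j}. \<bar>D i j\<bar>)"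
      using j by (subst sum.remove[of _ j]) auto
    also have "\<dots> \<le> (real m - 1) * t + (real m - 1) * t" using dg[OF j] offsum2[OF j] by linarith
    finally show ?thesis by (simp add: algebra_simps)
  qed
qed

lemma numeric:
  fixes x :: real and m :: nat
  assumes m2: "m \<ge> 2" and x: "x \<ge> 4320 * ln (real m)"
  shows "real m * real m * (2 * exp (- (x / 48))) \<le> exp (- (x / 1440))"
proof -
  have lm: "ln 2 \<le> ln (real m)" using m2 by simp
  have lm0: "0 \<le> ln (real m)" using m2 by simp
  define L where "L = ln (real m) + ln (real m) + ln 2"
  have "exp L = exp (ln (real m)) * exp (ln (real m)) * exp (ln 2)"
    unfolding L_def by (simp only: exp_add)
  also have "\<dots> = real m * real m * 2" using m2 by simp
  finally have eL: "exp L = real m * real m * 2" .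
  have "real m * real m * (2 * exp (- (x / 48))) = exp L * exp (- (x / 48))" using eL by simp
  also have "\<dots> = exp (L - x / 48)" by (simp add: exp_add[symmetric])
  also have "\<dots> \<le> exp (- (x / 1440))"
    using lm lm0 x unfolding L_def by simp
  finally show ?thesis .
qed


lemma Pdiff_off:
  assumes "i \<noteq> j"
  shows "P_emp n m p A X i j - P_star n m p A \<theta> \<beta> i j =
    ((\<Sum>l<n. of_bool (A l i) * of_bool (A l j) * of_bool (X (l, i)) * (1 - of_bool (X (l, j))))
     - (\<Sum>l<n. of_bool (A l i) * of_bool (A l j) * (resp_prob \<theta> \<beta> l i * (1 - resp_prob \<theta> \<beta> l j))))
    / (3/2 * real m * real n * p^2)"
  unfolding P_emp_def P_star_def complete_diag_def using assms
  by (simp only: if_False diff_divide_distrib) simp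

lemma Pdiff_diag:
  shows "P_emp n m p A X i i - P_star n m p A \<theta> \<beta> i i =
    - (\<Sum>k\<in>{..<m} - {i}. P_emp n m p A X i k - P_star n m p A \<theta> \<beta> i k)"
proof -
  define Qe where "Qe i j = (1 / (3/2 * real m * real n * p^2)) *
      (\<Sum>l<n. of_bool (A l i) * of_bool (A l j) * of_bool (X (l, i)) * (1 - of_bool (X (l, j))))" for i j
  define Qs where "Qs i j = (1 / (3/2 * real m * real n * p^2)) *
      (\<Sum>l<n. of_bool (A l i) * of_bool (A l j) * (resp_prob \<theta> \<beta> l i * (1 - resp_prob \<theta> \<beta> l j)))" for i j
  have e: "P_emp n m p A X = complete_diag m Qe" unfolding P_emp_def Qe_def ..
  have s: "P_star n m p A \<theta> \<beta> = complete_diag m Qs" unfolding P_star_def Qs_def ..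
  have "(\<Sum>k\<in>{..<m} - {i}. P_emp n m p A X i k - P_star n m p A \<theta> \<beta> i k) = (\<Sum>k\<in>{..<m} - {i}. Qe i k - Qs i k)"
    unfolding e s by (rule sum.cong[OF refl]) (auto simp: complete_diag_def)
  also have "\<dots> = (\<Sum>k\<in>{..<m} - {i}. Qe i k) - (\<Sum>k\<in>{..<m} - {i}. Qs i k)" by (rule sum_subtractf)
  finally show ?thesis unfolding e s complete_diag_def by simp
qed

theorem mainTheorem11:
  fixes n m :: nat and p :: real
    and \<theta> \<beta> :: "nat \<Rightarrow> real" and A :: "nat \<Rightarrow> nat \<Rightarrow> bool"
  assumes "n \<ge> 1" and "m \<ge> 2" and "0 < p" and "p \<le> 1"
    and eventA: "\<And>i j. i < m \<Longrightarrow> j < m \<Longrightarrow> i \<noteq> j \<Longrightarrow>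
        1/2 * real n * p^2 \<le> real (card {l. l < n \<and> A l i \<and> A l j}) \<and>
        real (card {l. l < n \<and> A l i \<and> A l j}) \<le> 3/2 * real n * p^2"
    and big: "real n * p^2 \<ge> 30 * 12^2 * exp (4 * kappa m \<beta>) / (gamma_min n m \<theta> \<beta>)^2 * ln (real m)"
  shows "measure_pmf.prob (response_pmf n m \<theta> \<beta>)
      {X. spectral_gap m (P_star n m p A \<theta> \<beta>)
          - spec_norm m (\<lambda>i j. P_emp n m p A X i j - P_star n m p A \<theta> \<beta> i j)
        \<ge> gamma_min n m \<theta> \<beta> / (6 * exp (2 * kappa m \<beta>))}
    \<ge> 1 - exp (- ((gamma_min n m \<theta> \<beta>)^2 * real n * p^2 / (10 * 12^2 * exp (4 * kappa m \<beta>))))"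
proof -
  note n1 = assms(1) and m2 = assms(2) and p0 = assms(3) and p1 = assms(4)
  define \<gamma> where "\<gamma> = gamma_min n m \<theta> \<beta>"
  define \<kappa> where "\<kappa> = kappa m \<beta>"
  define d where "d = 3/2 * real m * real n * p^2"
  define \<epsilon> where "\<epsilon> = real n * p^2 * \<gamma> / (8 * exp (2 * \<kappa>))"
  define x where "x = \<gamma>^2 * real n * p^2 / exp (4 * \<kappa>)"
  define S where "S i j X = (\<Sum>l<n. (of_bool :: bool \<Rightarrow> real) (A l i) * of_bool (A l j) * of_bool (X (l, i)) * (1 - of_bool (X (l, j))))"
    for i j and X :: "nat \<times> nat \<Rightarrow> bool"
  define \<mu> where "\<mu> i j = (\<Sum>l<n. of_bool (A l i) * of_bool (A l j) * (resp_prob \<theta> \<beta> l i * (1 - resp_prob \<theta> \<beta> l j)))" for i j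
  define G where "G = {X. \<forall>i<m. \<forall>j<m. i \<noteq> j \<longrightarrow> \<bar>S i j X - \<mu> i j\<bar> < \<epsilon>}"
  define T where "T = {X. spectral_gap m (P_star n m p A \<theta> \<beta>)
          - spec_norm m (\<lambda>i j. P_emp n m p A X i j - P_star n m p A \<theta> \<beta> i j) \<ge> \<gamma> / (6 * exp (2 * \<kappa>))}"
  define Mp where "Mp = response_pmf n m \<theta> \<beta>"
  have gpos: "0 < \<gamma>" unfolding \<gamma>_def by (rule gamma_pos[OF n1 m2])
  have k0: "0 \<le> \<kappa>" unfolding \<kappa>_def by (rule kappa_nonneg[OF n1 m2])
  have mpos: "0 < real m" using m2 by simp
  have nppos: "0 < real n * p^2" using n1 p0 by simp
  have dpos: "0 < d" unfolding d_def using mpos nppos by simp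
  have epos: "0 < \<epsilon>" unfolding \<epsilon>_def using nppos gpos by simp
  have GT: "G \<subseteq> T"
  proof
    fix X assume XG: "X \<in> G"
    define D where "D i j = P_emp n m p A X i j - P_star n m p A \<theta> \<beta> i j" for i j
    have Doff: "\<bar>D i j\<bar> \<le> \<epsilon> / d" if "i < m" "j < m" "i \<noteq> j" for i j
    proof -
      have "D i j = (S i j X - \<mu> i j) / d"
        unfolding D_def S_def \<mu>_def d_def by (rule Pdiff_off[OF that(3)])
      moreover have "\<bar>S i j X - \<mu> i j\<bar> \<le> \<epsilon>" using XG that unfolding G_def by (auto intro: less_imp_le)
      ultimately show ?thesis using dpos by (simp add: abs_divide divide_right_mono)
    qed
    have Ddiag: "D i i = - (\<Sum>k\<in>{..<m} - {i}. D i k)" if "i < m" for i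
      unfolding D_def by (rule Pdiff_diag)
    have R0: "0 \<le> 2 * (real m - 1) * (\<epsilon> / d)" using m2 epos dpos by simp
    have sn: "spec_norm m D \<le> 2 * (real m - 1) * (\<epsilon> / d)"
      by (rule spec_norm_le[OF R0 D_bounds(1)[OF Doff Ddiag] D_bounds(2)[OF Doff Ddiag]]) auto
    have "2 * (real m - 1) * (\<epsilon> / d) \<le> 2 * real m * (\<epsilon> / d)"
      using epos dpos by (intro mult_right_mono) auto
    also have "2 * real m * (\<epsilon> / d) = \<gamma> / (6 * exp (2 * \<kappa>))"
      unfolding \<epsilon>_def d_def using mpos nppos n1 p0 by (simp add: field_simps)
    finally have sn2: "spec_norm m D \<le> \<gamma> / (6 * exp (2 * \<kappa>))" using sn by linarith
    have gap: "\<gamma> / (3 * exp \<kappa>) \<le> spectral_gap m (P_star n m p A \<theta> \<beta>)"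
      unfolding \<gamma>_def \<kappa>_def by (rule gap_Pstar[OF n1 m2 p0 p1 eventA])
    have "\<gamma> / (3 * exp (2 * \<kappa>)) \<le> \<gamma> / (3 * exp \<kappa>)"
      using gpos k0 by (intro divide_left_mono) auto
    moreover have "\<gamma> / (3 * exp (2 * \<kappa>)) = 2 * (\<gamma> / (6 * exp (2 * \<kappa>)))" by simp
    ultimately have "\<gamma> / (6 * exp (2 * \<kappa>)) \<le> spectral_gap m (P_star n m p A \<theta> \<beta>) - spec_norm m D"
      using gap sn2 by linarith
    thus "X \<in> T" unfolding T_def D_def by simp
  qed
  have Mp_eq: "Mp = Pi_pmf ({..<n}\<times>{..<m}) False (\<lambda>(l,i). bernoulli_pmf (resp_prob \<theta> \<beta> l i))"
    unfolding Mp_def response_pmf_def ..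
  define Pairs where "Pairs = {(i,j). i < m \<and> j < m \<and> i \<noteq> j}"
  define B where "B ij = {X. \<epsilon> \<le> \<bar>S (fst ij) (snd ij) X - \<mu> (fst ij) (snd ij)\<bar>}" for ij
  have PS: "Pairs \<subseteq> {..<m}\<times>{..<m}" unfolding Pairs_def by auto
  have finP: "finite Pairs" by (rule finite_subset[OF PS]) simp
  have cardP: "real (card Pairs) \<le> real m * real m"
  proof -
    have "card Pairs \<le> card ({..<m}\<times>{..<m})" by (rule card_mono[OF _ PS]) simp
    thus ?thesis by (simp add: card_cartesian_product flip: of_nat_mult)
  qed
  have compl: "UNIV - G = \<Union>(B ` Pairs)" by (auto simp: G_def B_def Pairs_def not_less) (meson not_le)
  have e2: "exp (2 * \<kappa>) * exp (2 * \<kappa>) = exp (4 * \<kappa>)" by (simp add: exp_add[symmetric])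
  have xe: "x / 48 = 2 * \<epsilon>^2 / (3/2 * real n * p^2)"
    unfolding x_def \<epsilon>_def using n1 p0 e2[symmetric] by (simp add: field_simps power2_eq_square)
  have pB: "measure_pmf.prob Mp (B ij) \<le> 2 * exp (- (x / 48))" if ij: "ij \<in> Pairs" for ij
  proof -
    obtain i j where ijd: "ij = (i, j)" "i < m" "j < m" "i \<noteq> j" using ij unfolding Pairs_def by auto
    define c where "c = real (card {l. l < n \<and> A l i \<and> A l j})"
    have cb: "1/2 * real n * p^2 \<le> c" "c \<le> 3/2 * real n * p^2" using eventA[OF ijd(2-4)] unfolding c_def by auto
    have cpos: "0 < c" using cb(1) nppos by linarith
    have cpos': "card {l. l < n \<and> A l i \<and> A l j} > 0" using cpos unfolding c_def by simp
    have "measure_pmf.prob Mp (B ij) \<le> 2 * exp (- 2 * \<epsilon>^2 / c)"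
      unfolding Mp_eq B_def ijd(1) S_def \<mu>_def c_def fst_conv snd_conv
      by (rule hoeff_pair[OF ijd(2-4) _ _ cpos']) (use resp_prob_bounds[of \<theta> \<beta>] epos in \<open>auto intro: less_imp_le\<close>)
    also have "\<dots> \<le> 2 * exp (- (x / 48))"
    proof -
      have "2 * \<epsilon>^2 / (3/2 * real n * p^2) \<le> 2 * \<epsilon>^2 / c"
        using cb(2) cpos by (intro divide_left_mono) auto
      thus ?thesis unfolding xe by simp
    qed
    finally show ?thesis .
  qed
  have "measure_pmf.prob Mp (UNIV - G) \<le> (\<Sum>ij\<in>Pairs. measure_pmf.prob Mp (B ij))"
    unfolding compl by (rule measure_pmf.finite_measure_subadditive_finite[OF finP]) auto
  also have "\<dots> \<le> (\<Sum>ij\<in>Pairs. 2 * exp (- (x / 48)))" by (intro sum_mono pB)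
  also have "\<dots> = real (card Pairs) * (2 * exp (- (x / 48)))" by simp
  also have "\<dots> \<le> real m * real m * (2 * exp (- (x / 48)))" by (intro mult_right_mono cardP) simp
  also have "\<dots> \<le> exp (- (x / 1440))"
  proof (rule numeric[OF m2])
    have g2: "0 < \<gamma>^2 / exp (4 * \<kappa>)" using gpos by simp
    have "30 * 12^2 * exp (4 * \<kappa>) / \<gamma>^2 * ln (real m) * (\<gamma>^2 / exp (4 * \<kappa>)) \<le> real n * p^2 * (\<gamma>^2 / exp (4 * \<kappa>))"
      using big unfolding \<gamma>_def[symmetric] \<kappa>_def[symmetric] by (intro mult_right_mono) (use g2 in auto)
    moreover have "30 * 12^2 * exp (4 * \<kappa>) / \<gamma>^2 * ln (real m) * (\<gamma>^2 / exp (4 * \<kappa>)) = 4320 * ln (real m)"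
      using gpos by (simp add: field_simps)
    moreover have "real n * p^2 * (\<gamma>^2 / exp (4 * \<kappa>)) = x" unfolding x_def by (simp add: field_simps)
    ultimately show "4320 * ln (real m) \<le> x" by simp
  qed
  finally have pc: "measure_pmf.prob Mp (UNIV - G) \<le> exp (- (x / 1440))" .
  have "measure_pmf.prob Mp (UNIV - G) = 1 - measure_pmf.prob Mp G"
    using measure_pmf.prob_compl[of G Mp] by simp
  hence pG: "1 - exp (- (x / 1440)) \<le> measure_pmf.prob Mp G" using pc by simp
  have "measure_pmf.prob Mp G \<le> measure_pmf.prob Mp T"
    by (rule measure_pmf.finite_measure_mono[OF GT]) simp
  with pG have final: "1 - exp (- (x / 1440)) \<le> measure_pmf.prob Mp T" by simp
  have xx: "x / 1440 = (gamma_min n m \<theta> \<beta>)^2 * real n * p^2 / (10 * 12^2 * exp (4 * kappa m \<beta>))"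
    unfolding x_def \<gamma>_def \<kappa>_def by simp
  show ?thesis using final unfolding xx Mp_def T_def \<gamma>_def \<kappa>_def .
qed

end
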